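(* Let $\mathcal{T}$ be a fully sparse tournament with ordering $\sigma$ and backward arcs $e_1,\dots,e_b$. Let $G'$ be the digraph with vertex set $\{e_1,\dots,e_b\}$ having an arc $e_ie_j$ ($i\ne j$) whenever $(h(e_i),h(e_j),t(e_i))$ or $(h(e_i),t(e_j),t(e_i))$ is a triangle of $\mathcal{T}$ (equivalently, whenever $h(e_j)$ or $t(e_j)$ lies strictly between $h(e_i)$ and $t(e_i)$ in $\sigma$). Then the maximum number of pairwise arc-disjoint triangles of $\mathcal{T}$ equals the maximum size of an arc set $X\subseteq A(G')$ such that every vertex of $G'$ has out-degree at most $1$ in $X$ and $X$ contains no digon (no pair of arcs $xy,yx$). Moreover, for such a set $X$, the triangles $\Pi(e_ie_j)$, $e_ie_j\in X$, are pairwise arc-disjoint, where $\Pi(e_ie_j)$ is the triangle formed by $e_i$ and the endpoint of $e_j$ lying strictly between $h(e_i)$ and $t(e_i)$; and $X$ is optimal if and only if $\{\Pi(x):x\in X\}$ is a maximum triangle packing of $\mathcal{T}$.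
   Context: A tournament is an orientation of a complete graph; a triangle is a directed cycle of length 3. For an arc $a=uv$, $h(a)=v$ is its head and $t(a)=u$ its tail. Given a linear ordering $\sigma$ of the vertices, an arc $uv$ is backward if $v$ comes before $u$ in $\sigma$. $\mathcal{T}$ is fully sparse (with respect to $\sigma$) if the backward arcs form a matching, no backward arc joins two consecutive vertices of $\sigma$, and every vertex is the head or the tail of some backward arc. *)

theory Defs
  imports Main
begin

definition arc_tail :: "'a \<times> 'a \<Rightarrow> 'a" where "arc_tail a = fst a"
definition arc_head :: "'a \<times> 'a \<Rightarrow> 'a" where "arc_head a = snd a"

definition tournament :: "'a set \<Rightarrow> ('a \<times> 'a) set \<Rightarrow> bool" where
  "tournament V A \<longleftrightarrow> A \<subseteq> V \<times> V \<and> (\<forall>v. (v, v) \<notin> A) \<and>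
     (\<forall>u\<in>V. \<forall>v\<in>V. u \<noteq> v \<longrightarrow> ((u, v) \<in> A \<longleftrightarrow> (v, u) \<notin> A))"

definition is_ordering :: "'a set \<Rightarrow> 'a list \<Rightarrow> bool" where
  "is_ordering V \<sigma> \<longleftrightarrow> distinct \<sigma> \<and> set \<sigma> = V"

definition before :: "'a list \<Rightarrow> 'a \<Rightarrow> 'a \<Rightarrow> bool" where
  "before \<sigma> u v \<longleftrightarrow> (\<exists>i j. i < j \<and> j < length \<sigma> \<and> \<sigma> ! i = u \<and> \<sigma> ! j = v)"

definition strictly_between :: "'a list \<Rightarrow> 'a \<Rightarrow> 'a \<Rightarrow> 'a \<Rightarrow> bool" where
  "strictly_between \<sigma> x u v \<longleftrightarrow> before \<sigma> u x \<and> before \<sigma> x v"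

definition consecutive :: "'a list \<Rightarrow> 'a \<Rightarrow> 'a \<Rightarrow> bool" where
  "consecutive \<sigma> u v \<longleftrightarrow> (\<exists>i. Suc i < length \<sigma> \<and>
      ((\<sigma> ! i = u \<and> \<sigma> ! Suc i = v) \<or> (\<sigma> ! i = v \<and> \<sigma> ! Suc i = u)))"

definition backward_arcs :: "('a \<times> 'a) set \<Rightarrow> 'a list \<Rightarrow> ('a \<times> 'a) set" where
  "backward_arcs A \<sigma> = {a \<in> A. before \<sigma> (arc_head a) (arc_tail a)}"

definition fully_sparse :: "'a set \<Rightarrow> ('a \<times> 'a) set \<Rightarrow> 'a list \<Rightarrow> bool" where
  "fully_sparse V A \<sigma> \<longleftrightarrow>
     (\<forall>a\<in>backward_arcs A \<sigma>. \<forall>b\<in>backward_arcs A \<sigma>. a \<noteq> b \<longrightarrow>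
         {arc_tail a, arc_head a} \<inter> {arc_tail b, arc_head b} = {}) \<and>
     (\<forall>a\<in>backward_arcs A \<sigma>. \<not> consecutive \<sigma> (arc_tail a) (arc_head a)) \<and>
     (\<forall>v\<in>V. \<exists>a\<in>backward_arcs A \<sigma>. v = arc_head a \<or> v = arc_tail a)"

definition is_triangle :: "('a \<times> 'a) set \<Rightarrow> 'a \<Rightarrow> 'a \<Rightarrow> 'a \<Rightarrow> bool" where
  "is_triangle A x y z \<longleftrightarrow> (x, y) \<in> A \<and> (y, z) \<in> A \<and> (z, x) \<in> A"

definition tri_arcs :: "'a \<Rightarrow> 'a \<Rightarrow> 'a \<Rightarrow> ('a \<times> 'a) set" where
  "tri_arcs x y z = {(x, y), (y, z), (z, x)}"

definition triangles :: "('a \<times> 'a) set \<Rightarrow> ('a \<times> 'a) set set" where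
  "triangles A = {tri_arcs x y z | x y z. is_triangle A x y z}"

definition triangle_packing :: "('a \<times> 'a) set \<Rightarrow> ('a \<times> 'a) set set \<Rightarrow> bool" where
  "triangle_packing A P \<longleftrightarrow> P \<subseteq> triangles A \<and>
     (\<forall>S\<in>P. \<forall>T\<in>P. S \<noteq> T \<longrightarrow> S \<inter> T = {})"

definition packing_number :: "('a \<times> 'a) set \<Rightarrow> nat" where
  "packing_number A = Max (card ` {P. triangle_packing A P})"

definition max_triangle_packing :: "('a \<times> 'a) set \<Rightarrow> ('a \<times> 'a) set set \<Rightarrow> bool" where
  "max_triangle_packing A P \<longleftrightarrow> triangle_packing A P \<and> card P = packing_number A"

definition G'_arcs :: "('a \<times> 'a) set \<Rightarrow> 'a list \<Rightarrow> (('a \<times> 'a) \<times> ('a \<times> 'a)) set" where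
  "G'_arcs A \<sigma> = {(e, f). e \<in> backward_arcs A \<sigma> \<and> f \<in> backward_arcs A \<sigma> \<and> e \<noteq> f \<and>
      (is_triangle A (arc_head e) (arc_head f) (arc_tail e) \<or>
       is_triangle A (arc_head e) (arc_tail f) (arc_tail e))}"

definition good_arc_set :: "('a \<times> 'a) set \<Rightarrow> 'a list \<Rightarrow> (('a \<times> 'a) \<times> ('a \<times> 'a)) set \<Rightarrow> bool" where
  "good_arc_set A \<sigma> X \<longleftrightarrow> X \<subseteq> G'_arcs A \<sigma> \<and>
     (\<forall>e f g. (e, f) \<in> X \<longrightarrow> (e, g) \<in> X \<longrightarrow> f = g) \<and>
     (\<forall>e f. (e, f) \<in> X \<longrightarrow> (f, e) \<notin> X)"

text \<open>Pi(e f): triangle formed by e and the endpoint of f strictly between head e and tail e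
  (the head of f is preferred if both endpoints lie strictly between).\<close>
definition Pi_tri :: "'a list \<Rightarrow> ('a \<times> 'a) \<times> ('a \<times> 'a) \<Rightarrow> ('a \<times> 'a) set" where
  "Pi_tri \<sigma> ef = (let e = fst ef; f = snd ef;
      x = (if strictly_between \<sigma> (arc_head f) (arc_head e) (arc_tail e) then arc_head f else arc_tail f)
    in tri_arcs (arc_head e) x (arc_tail e))"

end

theory Submission
  imports Defs
begin

lemma before_set: "before \<sigma> u v \<Longrightarrow> u \<in> set \<sigma> \<and> v \<in> set \<sigma>"
  unfolding before_def by auto

lemma before_asym: "distinct \<sigma> \<Longrightarrow> before \<sigma> u v \<Longrightarrow> \<not> before \<sigma> v u"
  unfolding before_def by (metis less_asym' less_trans nth_eq_iff_index_eq)

lemma before_trans: "distinct \<sigma> \<Longrightarrow> before \<sigma> u v \<Longrightarrow> before \<sigma> v w \<Longrightarrow> before \<sigma> u w"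
  unfolding before_def by (metis less_trans nth_eq_iff_index_eq)

lemma before_total: "u \<in> set \<sigma> \<Longrightarrow> v \<in> set \<sigma> \<Longrightarrow> u \<noteq> v \<Longrightarrow> before \<sigma> u v \<or> before \<sigma> v u"
  unfolding before_def by (metis in_set_conv_nth linorder_neqE_nat)

locale FS =
  fixes V :: "'a set" and A :: "('a \<times> 'a) set" and \<sigma> :: "'a list"
  assumes fin: "finite V" and tour: "tournament V A" and ord: "is_ordering V \<sigma>"
    and fs: "fully_sparse V A \<sigma>"
begin

abbreviation "B \<equiv> backward_arcs A \<sigma>"

lemma dist: "distinct \<sigma>" and setS: "set \<sigma> = V" using ord unfolding is_ordering_def by auto
lemma A_sub: "A \<subseteq> V \<times> V" using tour unfolding tournament_def by (elim conjE)
lemma irr: "(v,v) \<notin> A" using tour unfolding tournament_def by blast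
lemma tot0: "\<forall>u\<in>V. \<forall>v\<in>V. u \<noteq> v \<longrightarrow> ((u, v) \<in> A \<longleftrightarrow> (v, u) \<notin> A)"
  using tour unfolding tournament_def by (elim conjE)
lemma tot: "u\<in>V \<Longrightarrow> v\<in>V \<Longrightarrow> u\<noteq>v \<Longrightarrow> (u,v)\<in>A \<longleftrightarrow> (v,u) \<notin> A"
  using tot0 by blast
lemma B_iff: "(u,v) \<in> B \<longleftrightarrow> (u,v) \<in> A \<and> before \<sigma> v u"
  by (simp add: backward_arcs_def arc_head_def arc_tail_def)
lemma fs1: "\<forall>a\<in>B. \<forall>b\<in>B. a \<noteq> b \<longrightarrow> {fst a, snd a} \<inter> {fst b, snd b} = {}"
  using fs unfolding fully_sparse_def arc_head_def arc_tail_def by (rule conjunct1)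
lemma fs3: "\<forall>v\<in>V. \<exists>f\<in>B. v = snd f \<or> v = fst f"
  using fs unfolding fully_sparse_def arc_head_def arc_tail_def by (elim conjE)
lemma match: "a\<in>B \<Longrightarrow> b\<in>B \<Longrightarrow> a\<noteq>b \<Longrightarrow> {fst a, snd a} \<inter> {fst b, snd b} = {}"
  using fs1 by blast
lemma cover: "v\<in>V \<Longrightarrow> \<exists>f\<in>B. v = snd f \<or> v = fst f"
  using fs3 by blast

lemma inV: "(u,v) \<in> A \<Longrightarrow> u \<in> V \<and> v \<in> V" using A_sub by auto

lemma fwd: "(u,v)\<in>A \<Longrightarrow> (u,v) \<notin> B \<Longrightarrow> before \<sigma> u v"
proof -
  assume a: "(u,v)\<in>A" "(u,v) \<notin> B"
  have "u \<in> set \<sigma>" "v \<in> set \<sigma>" using inV[OF a(1)] setS by auto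
  moreover have "u \<noteq> v" using irr a(1) by blast
  ultimately have "before \<sigma> u v \<or> before \<sigma> v u" by (rule before_total)
  then show ?thesis using a B_iff by blast
qed

lemma sb_of_tri: assumes "(t,h)\<in>B" "(h,w)\<in>A" "(w,t)\<in>A"
  shows "before \<sigma> h w \<and> before \<sigma> w t"
proof -
  have th: "t \<noteq> h" using assms(1) B_iff irr by blast
  have "(h,w) \<notin> B"
  proof
    assume "(h,w) \<in> B"
    moreover have "(h,w) \<noteq> (t,h)" using th by auto
    ultimately show False using match[OF \<open>(h,w) \<in> B\<close> assms(1)] by auto
  qed
  moreover have "(w,t) \<notin> B"
  proof
    assume "(w,t) \<in> B"
    moreover have "(w,t) \<noteq> (t,h)" using th by auto
    ultimately show False using match[OF \<open>(w,t) \<in> B\<close> assms(1)] by auto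
  qed
  ultimately show ?thesis using fwd assms by blast
qed

lemma tri_of_sb: assumes "(t,h)\<in>B" "before \<sigma> h w" "before \<sigma> w t"
  shows "is_triangle A h w t"
proof -
  have w: "w \<in> V" "h \<in> V" "t \<in> V" using before_set[OF assms(2)] before_set[OF assms(3)] setS by auto
  have wh: "w \<noteq> h" "w \<noteq> t"
    using before_asym[OF dist assms(2)] before_asym[OF dist assms(3)] assms(2,3) by auto
  have "(h,w) \<in> A"
  proof (rule ccontr)
    assume "(h,w) \<notin> A"
    then have "(w,h) \<in> A" using tot[OF w(2,1)] wh by blast
    then have "(w,h) \<in> B" using B_iff assms(2) by blast
    moreover have "(w,h) \<noteq> (t,h)" using wh by simp
    ultimately have "{w,h} \<inter> {t,h} = {}" using match[OF _ assms(1)] by fastforce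
    then show False by blast
  qed
  moreover have "(w,t) \<in> A"
  proof (rule ccontr)
    assume "(w,t) \<notin> A"
    then have "(t,w) \<in> A" using tot[OF w(1,3)] wh by blast
    then have "(t,w) \<in> B" using B_iff assms(3) by blast
    moreover have "(t,w) \<noteq> (t,h)" using wh by simp
    ultimately have "{t,w} \<inter> {t,h} = {}" using match[OF _ assms(1)] by fastforce
    then show False by blast
  qed
  moreover have "(t,h) \<in> A" using assms(1) B_iff by blast
  ultimately show ?thesis unfolding is_triangle_def by blast
qed

lemma tri_canon: assumes "is_triangle A x y z"
  shows "\<exists>t h w. (t,h)\<in>B \<and> before \<sigma> h w \<and> before \<sigma> w t \<and> tri_arcs x y z = tri_arcs h w t"
proof -
  have a: "(x,y)\<in>A" "(y,z)\<in>A" "(z,x)\<in>A" using assms unfolding is_triangle_def by auto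
  have r1: "tri_arcs x y z = tri_arcs y z x" "tri_arcs x y z = tri_arcs z x y"
    unfolding tri_arcs_def by auto
  consider "(z,x)\<in>B" | "(x,y)\<in>B" | "(y,z)\<in>B" | "(z,x)\<notin>B" "(x,y)\<notin>B" "(y,z)\<notin>B" by blast
  then show ?thesis
  proof cases
    case 1 then show ?thesis using sb_of_tri[OF 1 a(1) a(2)] by blast
  next
    case 2 then show ?thesis using sb_of_tri[OF 2 a(2) a(3)] r1(1) by blast
  next
    case 3 then show ?thesis using sb_of_tri[OF 3 a(3) a(1)] r1(2) by blast
  next
    case 4
    then have "before \<sigma> x y" "before \<sigma> y z" "before \<sigma> z x" using fwd a by auto
    then have "before \<sigma> x z" "before \<sigma> z x" using before_trans[OF dist] by blast+
    then show ?thesis using before_asym[OF dist] by blast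
  qed
qed


lemma G'_Pi: assumes "(e,f) \<in> G'_arcs A \<sigma>"
  shows "e \<in> B \<and> f \<in> B \<and> e \<noteq> f \<and> (\<exists>w. (w = snd f \<or> w = fst f) \<and> before \<sigma> (snd e) w \<and> before \<sigma> w (fst e)
     \<and> Pi_tri \<sigma> (e,f) = tri_arcs (snd e) w (fst e))"
proof -
  obtain t h t' h' where eq: "e = (t,h)" "f = (t',h')" by (cases e, cases f) auto
  have g: "(t,h) \<in> B" "(t',h') \<in> B" "e \<noteq> f"
    "is_triangle A h h' t \<or> is_triangle A h t' t"
    using assms unfolding eq G'_arcs_def arc_head_def arc_tail_def by simp_all
  have PT: "Pi_tri \<sigma> (e,f) = tri_arcs h (if strictly_between \<sigma> h' h t then h' else t') t"
    unfolding eq Pi_tri_def Let_def arc_head_def arc_tail_def by simp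
  show ?thesis
  proof (cases "strictly_between \<sigma> h' h t")
    case True
    then have "before \<sigma> h h'" "before \<sigma> h' t" unfolding strictly_between_def by auto
    moreover have "Pi_tri \<sigma> (e,f) = tri_arcs h h' t" using PT True by simp
    ultimately show ?thesis using g unfolding eq by (intro conjI exI[of _ h']) simp_all
  next
    case False
    have "\<not> is_triangle A h h' t"
    proof
      assume "is_triangle A h h' t"
      then have "before \<sigma> h h' \<and> before \<sigma> h' t" using sb_of_tri[OF g(1)] unfolding is_triangle_def by blast
      then show False using False unfolding strictly_between_def by blast
    qed
    then have "is_triangle A h t' t" using g by blast
    then have "before \<sigma> h t' \<and> before \<sigma> t' t" using sb_of_tri[OF g(1)] unfolding is_triangle_def by blast
    moreover have "Pi_tri \<sigma> (e,f) = tri_arcs h t' t" using PT False by simp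
    ultimately show ?thesis using g unfolding eq by (intro conjI exI[of _ t']) simp_all
  qed
qed

lemma tri_mem: "(t,h)\<in>B \<Longrightarrow> before \<sigma> h w \<Longrightarrow> before \<sigma> w t \<Longrightarrow> tri_arcs h w t \<in> triangles A"
  using tri_of_sb unfolding triangles_def by blast

lemma Pi_mem: "x \<in> G'_arcs A \<sigma> \<Longrightarrow> Pi_tri \<sigma> x \<in> triangles A"
proof -
  assume x: "x \<in> G'_arcs A \<sigma>"
  obtain e f where eq: "x = (e,f)" by (cases x)
  obtain w where w: "before \<sigma> (snd e) w" "before \<sigma> w (fst e)" "Pi_tri \<sigma> (e,f) = tri_arcs (snd e) w (fst e)"
    and eB: "e \<in> B" using G'_Pi[OF x[unfolded eq]] by blast
  have "(fst e, snd e) \<in> B" using eB by simp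
  from tri_mem[OF this w(1,2)] show ?thesis using w(3) eq by simp
qed

lemma Pi_disj: assumes good: "good_arc_set A \<sigma> X" and xy: "x \<in> X" "y \<in> X" "x \<noteq> y"
  shows "Pi_tri \<sigma> x \<inter> Pi_tri \<sigma> y = {}"
proof -
  obtain e f e2 f2 where eq: "x = (e,f)" "y = (e2,f2)" by (cases x, cases y) auto
  have G: "(e,f) \<in> G'_arcs A \<sigma>" "(e2,f2) \<in> G'_arcs A \<sigma>" using good xy eq unfolding good_arc_set_def by auto
  obtain w where w: "w = snd f \<or> w = fst f" "before \<sigma> (snd e) w" "before \<sigma> w (fst e)"
     "Pi_tri \<sigma> (e,f) = tri_arcs (snd e) w (fst e)" and B1: "e \<in> B" "f \<in> B" "e \<noteq> f"
    using G'_Pi[OF G(1)] by blast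
  obtain w2 where w2: "w2 = snd f2 \<or> w2 = fst f2" "before \<sigma> (snd e2) w2" "before \<sigma> w2 (fst e2)"
     "Pi_tri \<sigma> (e2,f2) = tri_arcs (snd e2) w2 (fst e2)" and B2: "e2 \<in> B" "f2 \<in> B" "e2 \<noteq> f2"
    using G'_Pi[OF G(2)] by blast
  have ee: "e \<noteq> e2"
  proof
    assume "e = e2"
    then have "f = f2" using good xy eq unfolding good_arc_set_def by blast
    then show False using \<open>e = e2\<close> xy eq by simp
  qed
  have m: "{fst e, snd e} \<inter> {fst e2, snd e2} = {}" using match[OF B1(1) B2(1) ee] .
  have wf: "w \<in> {fst e2, snd e2} \<Longrightarrow> f = e2"
    using match[OF B1(2) B2(1)] w(1) by blast
  have wf2: "w2 \<in> {fst e, snd e} \<Longrightarrow> f2 = e"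
    using match[OF B2(2) B1(1)] w2(1) by blast
  have nd: "\<not> (f = e2 \<and> f2 = e)" using good xy eq unfolding good_arc_set_def by blast
  have d1: "w \<noteq> fst e" "w \<noteq> snd e" "w2 \<noteq> fst e2" "w2 \<noteq> snd e2"
    using w w2 before_asym dist by metis+
  show ?thesis unfolding eq w(4) w2(4)
  proof (rule ccontr)
    assume "tri_arcs (snd e) w (fst e) \<inter> tri_arcs (snd e2) w2 (fst e2) \<noteq> {}"
    then show False using m wf wf2 nd d1 unfolding tri_arcs_def by auto
  qed
qed

lemma Pi_inj: assumes g: "good_arc_set A \<sigma> X" shows "inj_on (Pi_tri \<sigma>) X"
  unfolding inj_on_def
proof (intro ballI impI)
  fix x y assume xy: "x \<in> X" "y \<in> X" "Pi_tri \<sigma> x = Pi_tri \<sigma> y"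
  show "x = y"
  proof (rule ccontr)
    assume "x \<noteq> y"
    then have "Pi_tri \<sigma> x = {}" using Pi_disj[OF g xy(1,2)] xy(3) by simp
    moreover obtain e f where "x = (e,f)" by (cases x)
    ultimately show False unfolding Pi_tri_def Let_def tri_arcs_def by simp
  qed
qed

lemma Pi_packing: assumes g: "good_arc_set A \<sigma> X" shows "triangle_packing A (Pi_tri \<sigma> ` X)"
  unfolding triangle_packing_def
proof (intro conjI ballI impI)
  have "X \<subseteq> G'_arcs A \<sigma>" using g unfolding good_arc_set_def by blast
  then show "Pi_tri \<sigma> ` X \<subseteq> triangles A" using Pi_mem by blast
next
  fix S T assume "S \<in> Pi_tri \<sigma> ` X" "T \<in> Pi_tri \<sigma> ` X" "S \<noteq> T"
  then obtain x y where "x \<in> X" "y \<in> X" "S = Pi_tri \<sigma> x" "T = Pi_tri \<sigma> y" "x \<noteq> y" by blast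
  then show "S \<inter> T = {}" using Pi_disj[OF g] by blast
qed

lemma pack_to_good: assumes P: "triangle_packing A P"
  shows "\<exists>X. good_arc_set A \<sigma> X \<and> card X = card P"
proof -
  let ?Q = "\<lambda>T e w f. e \<in> B \<and> before \<sigma> (snd e) w \<and> before \<sigma> w (fst e) \<and>
      T = tri_arcs (snd e) w (fst e) \<and> f \<in> B \<and> (w = snd f \<or> w = fst f)"
  have ex: "\<forall>T\<in>P. \<exists>e w f. ?Q T e w f"
  proof
    fix T assume "T \<in> P"
    then have "T \<in> triangles A" using P unfolding triangle_packing_def by blast
    then obtain x y z where xyz: "is_triangle A x y z" "T = tri_arcs x y z" unfolding triangles_def by blast
    obtain t h w where th: "(t,h)\<in>B" "before \<sigma> h w" "before \<sigma> w t" "tri_arcs x y z = tri_arcs h w t"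
      using tri_canon[OF xyz(1)] by blast
    have "w \<in> V" using before_set[OF th(2)] setS by auto
    then obtain f where f: "f \<in> B" "w = snd f \<or> w = fst f" using cover by blast
    have "?Q T (t,h) w f" using th f xyz(2) by simp
    then show "\<exists>e w f. ?Q T e w f" by blast
  qed
  obtain E where E: "\<forall>T\<in>P. \<exists>w f. ?Q T (E T) w f" using bchoice[OF ex] by blast
  obtain W where W: "\<forall>T\<in>P. \<exists>f. ?Q T (E T) (W T) f" using bchoice[OF E] by blast
  obtain F where F: "\<forall>T\<in>P. ?Q T (E T) (W T) (F T)" using bchoice[OF W] by blast
  have disj: "\<And>T T'. T \<in> P \<Longrightarrow> T' \<in> P \<Longrightarrow> T \<noteq> T' \<Longrightarrow> T \<inter> T' = {}"
    using P unfolding triangle_packing_def by blast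
  have Emem: "\<And>T. T \<in> P \<Longrightarrow> E T \<in> T"
  proof -
    fix T assume "T \<in> P"
    then have eq: "T = tri_arcs (snd (E T)) (W T) (fst (E T))" using F by blast
    have mem: "E T \<in> tri_arcs (snd (E T)) (W T) (fst (E T))" unfolding tri_arcs_def by simp
    from mem eq[symmetric] show "E T \<in> T" by (rule back_subst[of "\<lambda>S. E T \<in> S"])
  qed
  have Einj: "\<And>T T'. T \<in> P \<Longrightarrow> T' \<in> P \<Longrightarrow> E T = E T' \<Longrightarrow> T = T'"
  proof (rule ccontr)
    fix T T' assume a: "T \<in> P" "T' \<in> P" "E T = E T'" "T \<noteq> T'"
    have "E T \<in> T \<inter> T'" using Emem[OF a(1)] Emem[OF a(2)] a(3) by simp
    then show False using disj[OF a(1,2,4)] by blast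
  qed
  define X where "X = (\<lambda>T. (E T, F T)) ` P"
  have inj: "inj_on (\<lambda>T. (E T, F T)) P" unfolding inj_on_def using Einj by blast
  have cardX: "card X = card P" unfolding X_def using card_image[OF inj] .
  have sub: "X \<subseteq> G'_arcs A \<sigma>"
  proof
    fix x assume "x \<in> X"
    then obtain T where T: "T \<in> P" "x = (E T, F T)" unfolding X_def by blast
    have q: "?Q T (E T) (W T) (F T)" using F T(1) by blast
    have eB: "(fst (E T), snd (E T)) \<in> B" using q by simp
    have tri: "is_triangle A (snd (E T)) (W T) (fst (E T))" using tri_of_sb[OF eB] q by blast
    have ne: "E T \<noteq> F T"
    proof
      assume "E T = F T"
      then have "W T = snd (E T) \<or> W T = fst (E T)" using q by simp
      then show False using q before_asym[OF dist] by metis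
    qed
    show "x \<in> G'_arcs A \<sigma>" unfolding T(2) G'_arcs_def arc_head_def arc_tail_def
      using q tri ne by auto
  qed
  have outd: "\<forall>e f g. (e, f) \<in> X \<longrightarrow> (e, g) \<in> X \<longrightarrow> f = g"
    unfolding X_def using Einj by blast
  have nodig: "\<forall>e f. (e, f) \<in> X \<longrightarrow> (f, e) \<notin> X"
  proof (intro allI impI notI)
    fix e f assume "(e,f) \<in> X" "(f,e) \<in> X"
    then obtain T T' where T: "T \<in> P" "E T = e" "F T = f" and T': "T' \<in> P" "E T' = f" "F T' = e"
      unfolding X_def image_iff by (metis prod.inject)
    have q: "?Q T e (W T) f" using F T by blast
    have q': "?Q T' f (W T') e" using F T' by blast
    have "e \<noteq> f" using sub \<open>(e,f) \<in> X\<close> unfolding G'_arcs_def by blast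
    then have TT: "T \<noteq> T'" using T T' by blast
    have TI: "T \<inter> T' = {}" using disj[OF T(1) T'(1) TT] .
    consider "W T = snd f" "W T' = snd e" | "W T = fst f" "W T' = fst e"
      | "W T = snd f" "W T' = fst e" | "W T = fst f" "W T' = snd e" using q q' by blast
    then show False
    proof cases
      case 1 then show ?thesis using q q' before_asym[OF dist] by metis
    next
      case 2 then show ?thesis using q q' before_asym[OF dist] by metis
    next
      case 3
      have "(snd f, fst e) \<in> T" using q 3 unfolding tri_arcs_def by auto
      moreover have "(snd f, fst e) \<in> T'" using q' 3 unfolding tri_arcs_def by auto
      ultimately show ?thesis using TI by blast
    next
      case 4
      have "(snd e, fst f) \<in> T" using q 4 unfolding tri_arcs_def by auto
      moreover have "(snd e, fst f) \<in> T'" using q' 4 unfolding tri_arcs_def by auto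
      ultimately show ?thesis using TI by blast
    qed
  qed
  have "good_arc_set A \<sigma> X" unfolding good_arc_set_def using sub outd nodig by blast
  then show ?thesis using cardX by blast
qed

lemma main:
  shows "packing_number A = Max (card ` {X. good_arc_set A \<sigma> X})
    \<and> (\<forall>X. good_arc_set A \<sigma> X \<longrightarrow>
          (\<forall>x\<in>X. Pi_tri \<sigma> x \<in> triangles A) \<and>
          (\<forall>x\<in>X. \<forall>y\<in>X. x \<noteq> y \<longrightarrow> Pi_tri \<sigma> x \<inter> Pi_tri \<sigma> y = {}))
    \<and> (\<forall>X. good_arc_set A \<sigma> X \<longrightarrow>
          (card X = Max (card ` {Y. good_arc_set A \<sigma> Y}) \<longleftrightarrow>
           max_triangle_packing A (Pi_tri \<sigma> ` X)))"
proof -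
  have finA: "finite A" using A_sub fin by (meson finite_SigmaI finite_subset)
  have finB: "finite B" using finA unfolding backward_arcs_def by simp
  have finG: "finite (G'_arcs A \<sigma>)"
  proof (rule finite_subset[OF _ finite_SigmaI[OF finB finB]])
    show "G'_arcs A \<sigma> \<subseteq> B \<times> B" unfolding G'_arcs_def by blast
  qed
  let ?GS = "{X. good_arc_set A \<sigma> X}"
  let ?PS = "{P. triangle_packing A P}"
  have finGS: "finite ?GS"
    by (rule finite_subset[of _ "Pow (G'_arcs A \<sigma>)"]) (auto simp: good_arc_set_def finG)
  have triA: "triangles A \<subseteq> Pow A" unfolding triangles_def is_triangle_def tri_arcs_def by auto
  have finT: "finite (triangles A)" using finite_subset[OF triA] finA by simp
  have finPS: "finite ?PS"
    by (rule finite_subset[of _ "Pow (triangles A)"]) (auto simp: triangle_packing_def finT)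
  have e1: "{} \<in> ?GS" unfolding good_arc_set_def by simp
  have e2: "{} \<in> ?PS" unfolding triangle_packing_def by simp
  have fX: "\<And>X. good_arc_set A \<sigma> X \<Longrightarrow> card (Pi_tri \<sigma> ` X) = card X"
    using Pi_inj card_image by blast
  have le1: "\<forall>X\<in>?GS. card X \<le> packing_number A"
  proof
    fix X assume "X \<in> ?GS"
    then have g: "good_arc_set A \<sigma> X" by simp
    have "card (Pi_tri \<sigma> ` X) \<in> card ` ?PS" using Pi_packing[OF g] by blast
    then have "card (Pi_tri \<sigma> ` X) \<le> packing_number A" unfolding packing_number_def
      using finPS by simp
    then show "card X \<le> packing_number A" using fX[OF g] by simp
  qed
  have le2: "\<forall>P\<in>?PS. card P \<le> Max (card ` ?GS)"
  proof
    fix P assume "P \<in> ?PS"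
    then obtain X where "good_arc_set A \<sigma> X" "card X = card P" using pack_to_good by blast
    then show "card P \<le> Max (card ` ?GS)" using finGS by (metis Max_ge finite_imageI image_eqI mem_Collect_eq)
  qed
  have eq: "packing_number A = Max (card ` ?GS)"
  proof (rule antisym)
    show "packing_number A \<le> Max (card ` ?GS)" unfolding packing_number_def
      using le2 finPS e2 by (subst Max_le_iff) auto
    show "Max (card ` ?GS) \<le> packing_number A"
      using le1 finGS e1 by (subst Max_le_iff) auto
  qed
  have p2: "\<forall>X. good_arc_set A \<sigma> X \<longrightarrow>
          (\<forall>x\<in>X. Pi_tri \<sigma> x \<in> triangles A) \<and>
          (\<forall>x\<in>X. \<forall>y\<in>X. x \<noteq> y \<longrightarrow> Pi_tri \<sigma> x \<inter> Pi_tri \<sigma> y = {})"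
  proof (intro allI impI conjI ballI)
    fix X x assume g: "good_arc_set A \<sigma> X" and x: "x \<in> X"
    then show "Pi_tri \<sigma> x \<in> triangles A" using Pi_mem unfolding good_arc_set_def by blast
  next
    fix X x y assume g: "good_arc_set A \<sigma> X" and "x \<in> X" "y \<in> X" "x \<noteq> y"
    then show "Pi_tri \<sigma> x \<inter> Pi_tri \<sigma> y = {}" using Pi_disj by blast
  qed
  have p3: "\<forall>X. good_arc_set A \<sigma> X \<longrightarrow>
          (card X = Max (card ` ?GS) \<longleftrightarrow> max_triangle_packing A (Pi_tri \<sigma> ` X))"
  proof (intro allI impI)
    fix X assume g: "good_arc_set A \<sigma> X"
    show "card X = Max (card ` ?GS) \<longleftrightarrow> max_triangle_packing A (Pi_tri \<sigma> ` X)"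
      unfolding max_triangle_packing_def using Pi_packing[OF g] fX[OF g] eq by simp
  qed
  show ?thesis using eq p2 p3 by blast
qed

end
theorem mainTheorem10:
  fixes V :: "'a set" and A :: "('a \<times> 'a) set" and \<sigma> :: "'a list"
  assumes "finite V" and "tournament V A" and "is_ordering V \<sigma>" and "fully_sparse V A \<sigma>"
  shows "packing_number A = Max (card ` {X. good_arc_set A \<sigma> X})
    \<and> (\<forall>X. good_arc_set A \<sigma> X \<longrightarrow>
          (\<forall>x\<in>X. Pi_tri \<sigma> x \<in> triangles A) \<and>
          (\<forall>x\<in>X. \<forall>y\<in>X. x \<noteq> y \<longrightarrow> Pi_tri \<sigma> x \<inter> Pi_tri \<sigma> y = {}))
    \<and> (\<forall>X. good_arc_set A \<sigma> X \<longrightarrow>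
          (card X = Max (card ` {Y. good_arc_set A \<sigma> Y}) \<longleftrightarrow>
           max_triangle_packing A (Pi_tri \<sigma> ` X)))"
proof -
  interpret FS V A \<sigma> using assms by unfold_locales
  show ?thesis by (rule main)
qed

end
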